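(* Suppose that for some increasing function $\psi$ as in the context, some positive finite numbers $I_{ij}$ ($i\ne j\in\mathcal N_0$) and some $r\ge1$, the normalized LLRs converge $r$-completely: for all $i\ne j$, $$\lim_{n\to\infty}\sum_{t=n}^\infty t^{r-1}\mathsf P_i\Big(\Big|\frac{\lambda_{ij}(t)}{\psi(t)}-I_{ij}\Big|>\varepsilon\Big)=0\quad\text{for every }\varepsilon>0.$$ If the thresholds of the MSPRT $D_*=(T_*,d_* )$ satisfy $\mathsf P_i(d_*=j)\le\alpha_{ij}$ for all $i\ne j$ and $a_{ji}\sim\log(1/\alpha_{ji})$ as $\alpha_{\max}\to0$ (in particular $a_{ji}=\log(1/\alpha_{ji})$), then for all $i\in\mathcal N_0$, as $\alpha_{\max}\to0$, $$\mathsf E_i[T_*^r]\sim\Big[\Psi\Big(\max_{j\in\mathcal N_0\setminus i}\frac{|\log\alpha_{ji}|}{I_{ij}}\Big)\Big]^r\sim\inf_{D\in\mathbb C_{\rm sim}(\boldsymbol\alpha)}\mathsf E_i[T^r].$$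
   Context: Observations $X_1,X_2,\dots$, $\mathcal F_n=\sigma(X_1,\dots,X_n)$, $\mathbf X_1^n=(X_1,\dots,X_n)$. There are $N+1$ simple hypotheses $H_i:\mathsf P=\mathsf P_i$, $i\in\mathcal N_0=\{0,1,\dots,N\}$ ($N\ge1$), where $\mathsf P_i$ restricted to $\mathcal F_n$ has density $p_{i,n}(\mathbf X_1^n)=\prod_{t=1}^n f_{i,t}(X_t\mid\mathbf X_1^{t-1})$, these restrictions being mutually absolutely continuous; $\mathsf E_i$ is expectation under $\mathsf P_i$; $\lambda_{ij}(n)=\log[p_{i,n}(\mathbf X_1^n)/p_{j,n}(\mathbf X_1^n)]$. A test $D=(T,d)$ consists of a stopping time $T$ w.r.t. $(\mathcal F_n)$ and an $\mathcal F_T$-measurable decision $d\in\mathcal N_0$. For $\boldsymbol\alpha=(\alpha_{ij})_{i\ne j}$, $\alpha_{ij}\in(0,1)$: $\mathbb C_{\rm sim}(\boldsymbol\alpha)=\{D:\mathsf P_i(d=j)\le\alpha_{ij}\ \forall i\ne j\}$, $\alpha_{\max}=\max_{i\ne j}\alpha_{ij}$; limits as $\alpha_{\max}\to0$ are along families with $|\log\alpha_{ij}|/|\log\alpha_{\max}|\to c_{ij}\in(0,1]$. The function $\psi:\mathbb R_+\to\mathbb R_+$ is increasing and one-to-one with $\psi(t)\to\infty$; $\Psi=\psi^{-1}$, $\Psi(t)\to\infty$, and $\lim_{\delta\to1}\lim_{t\to\infty}\Psi(\delta t)/\Psi(t)=1$. Matrix SPRT (MSPRT): given positive thresholds $a_{ij}$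 ($i\ne j$), let $T_i=\inf\{n\ge1:\lambda_{ij}(n)\ge a_{ji}\text{ for all }j\in\mathcal N_0\setminus i\}$, $T_*=\min_{k\in\mathcal N_0}T_k$, and $d_*=i$ if $T_*=T_i$ (ties broken by any fixed rule). *)

theory Defs
  imports "HOL-Probability.Probability"
begin

definition obs_filt :: "'a measure \<Rightarrow> 'b measure \<Rightarrow> (nat \<Rightarrow> 'a \<Rightarrow> 'b) \<Rightarrow> nat \<Rightarrow> 'a measure" where
  "obs_filt M S X n =
     sigma (space M) (\<Union>t\<in>{1..n}. {X t -` B \<inter> space M | B. B \<in> sets S})"

definition is_stopping_time :: "(nat \<Rightarrow> 'a measure) \<Rightarrow> ('a \<Rightarrow> enat) \<Rightarrow> bool" where
  "is_stopping_time F T \<longleftrightarrow> (\<forall>n. {\<omega> \<in> space (F n). T \<omega> \<le> enat n} \<in> sets (F n))"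

definition is_FT_decision :: "'a measure \<Rightarrow> (nat \<Rightarrow> 'a measure) \<Rightarrow> ('a \<Rightarrow> enat) \<Rightarrow> nat \<Rightarrow> ('a \<Rightarrow> nat) \<Rightarrow> bool" where
  "is_FT_decision M F T N d \<longleftrightarrow>
     (\<forall>\<omega>\<in>space M. d \<omega> \<le> N) \<and>
     (\<forall>j. {\<omega> \<in> space M. d \<omega> = j} \<in> sets M \<and>
          (\<forall>n. {\<omega> \<in> space M. d \<omega> = j \<and> T \<omega> \<le> enat n} \<in> sets (F n)))"

definition tpow :: "real \<Rightarrow> enat \<Rightarrow> ennreal" where
  "tpow r t = (case t of enat n \<Rightarrow> ennreal (real n powr r) | \<infinity> \<Rightarrow> \<infinity>)"

definition mom :: "'a measure \<Rightarrow> real \<Rightarrow> ('a \<Rightarrow> enat) \<Rightarrow> ennreal" where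
  "mom Q r T = (\<integral>\<^sup>+ \<omega>. tpow r (T \<omega>) \<partial>Q)"

definition Csim :: "'a measure \<Rightarrow> (nat \<Rightarrow> 'a measure) \<Rightarrow> (nat \<Rightarrow> 'a measure) \<Rightarrow> nat
     \<Rightarrow> (nat \<Rightarrow> nat \<Rightarrow> real) \<Rightarrow> (('a \<Rightarrow> enat) \<times> ('a \<Rightarrow> nat)) set" where
  "Csim M F P N \<alpha> = {(T, d). is_stopping_time F T \<and> is_FT_decision M F T N d \<and>
      (\<forall>i\<le>N. \<forall>j\<le>N. i \<noteq> j \<longrightarrow> measure (P i) {\<omega> \<in> space M. d \<omega> = j} \<le> \<alpha> i j)}"

definition msprt_Ti :: "nat \<Rightarrow> (nat \<Rightarrow> nat \<Rightarrow> nat \<Rightarrow> 'a \<Rightarrow> real) \<Rightarrow> (nat \<Rightarrow> nat \<Rightarrow> real)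
     \<Rightarrow> nat \<Rightarrow> 'a \<Rightarrow> enat" where
  "msprt_Ti N lam a i \<omega> =
     (if \<exists>n\<ge>1. \<forall>j\<le>N. j \<noteq> i \<longrightarrow> lam i j n \<omega> \<ge> a j i
      then enat (LEAST n. n \<ge> 1 \<and> (\<forall>j\<le>N. j \<noteq> i \<longrightarrow> lam i j n \<omega> \<ge> a j i))
      else \<infinity>)"

definition msprt_T :: "nat \<Rightarrow> (nat \<Rightarrow> nat \<Rightarrow> nat \<Rightarrow> 'a \<Rightarrow> real) \<Rightarrow> (nat \<Rightarrow> nat \<Rightarrow> real) \<Rightarrow> 'a \<Rightarrow> enat" where
  "msprt_T N lam a \<omega> = Min ((\<lambda>k. msprt_Ti N lam a k \<omega>) ` {0..N})"

text \<open>A decision rule for the MSPRT: d_* = i whenever T_* = T_i < \<infinity> (ties broken by a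
  rule that is admissible as a decision, i.e. d_* is F_T_*-measurable with values in {0..N}).\<close>
definition msprt_decision :: "'a measure \<Rightarrow> (nat \<Rightarrow> 'a measure) \<Rightarrow> nat
     \<Rightarrow> (nat \<Rightarrow> nat \<Rightarrow> nat \<Rightarrow> 'a \<Rightarrow> real) \<Rightarrow> (nat \<Rightarrow> nat \<Rightarrow> real) \<Rightarrow> ('a \<Rightarrow> nat) \<Rightarrow> bool" where
  "msprt_decision M F N lam a d \<longleftrightarrow>
     is_FT_decision M F (msprt_T N lam a) N d \<and>
     (\<forall>\<omega>\<in>space M. msprt_T N lam a \<omega> < \<infinity> \<longrightarrow>
        msprt_Ti N lam a (d \<omega>) \<omega> = msprt_T N lam a \<omega>)"

end

theory Submission
  imports Defs
begin

lemma obs_filt_space: "space (obs_filt M S X n) = space M"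
  unfolding obs_filt_def by (rule space_measure_of) auto

lemma obs_filt_sets:
  assumes "\<And>t. X t \<in> M \<rightarrow>\<^sub>M S"
  shows "sets (obs_filt M S X n) \<subseteq> sets M"
proof -
  have g: "(\<Union>t\<in>{1..n}. {X t -` B \<inter> space M | B. B \<in> sets S}) \<subseteq> sets M"
    using assms measurable_sets by blast
  have "sets (obs_filt M S X n) = sigma_sets (space M) (\<Union>t\<in>{1..n}. {X t -` B \<inter> space M | B. B \<in> sets S})"
    unfolding obs_filt_def by (rule sets_measure_of) auto
  then show ?thesis using sets.sigma_sets_subset[OF g] by simp
qed

locale thm3 =
  fixes M :: "'a measure" and N :: nat and P :: "nat \<Rightarrow> 'a measure"
    and F :: "nat \<Rightarrow> 'a measure"
    and \<mu> :: "nat \<Rightarrow> 'a measure" and p :: "nat \<Rightarrow> nat \<Rightarrow> 'a \<Rightarrow> real"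
    and lam :: "nat \<Rightarrow> nat \<Rightarrow> nat \<Rightarrow> 'a \<Rightarrow> real"
    and \<psi> \<Psi> :: "real \<Rightarrow> real" and L :: "real \<Rightarrow> real"
    and I :: "nat \<Rightarrow> nat \<Rightarrow> real" and r :: real
    and \<alpha> :: "nat \<Rightarrow> nat \<Rightarrow> nat \<Rightarrow> real" and \<alpha>max :: "nat \<Rightarrow> real"
    and a :: "nat \<Rightarrow> nat \<Rightarrow> nat \<Rightarrow> real" and d :: "nat \<Rightarrow> 'a \<Rightarrow> nat"
  assumes N_ge: "N \<ge> 1"
    and P_prob: "\<And>i. i \<le> N \<Longrightarrow> prob_space (P i)"
    and P_sets: "\<And>i. i \<le> N \<Longrightarrow> sets (P i) = sets M"
    and F_space: "\<And>n. space (F n) = space M"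
    and F_sets: "\<And>n. sets (F n) \<subseteq> sets M"
    and \<mu>_sets: "\<And>n. sets (\<mu> n) = sets (F n)"
    and p_meas: "\<And>i n. i \<le> N \<Longrightarrow> p i n \<in> borel_measurable (F n)"
    and p_nonneg: "\<And>i n \<omega>. i \<le> N \<Longrightarrow> p i n \<omega> \<ge> 0"
    and p_dens: "\<And>i n. i \<le> N \<Longrightarrow>
        restr_to_subalg (P i) (F n) = density (\<mu> n) (\<lambda>\<omega>. ennreal (p i n \<omega>))"
    and mutual_ac: "\<And>i j n. i \<le> N \<Longrightarrow> j \<le> N \<Longrightarrow>
        absolutely_continuous (restr_to_subalg (P i) (F n)) (restr_to_subalg (P j) (F n))"
    and lam_def: "lam = (\<lambda>i j n \<omega>. ln (p i n \<omega> / p j n \<omega>))"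
    and \<psi>_mono: "strict_mono_on {0<..} \<psi>"
    and \<psi>_bij: "bij_betw \<psi> {0<..} {0<..}"
    and \<Psi>_def: "\<Psi> = the_inv_into {0<..} \<psi>"
    and \<Psi>_inf: "filterlim \<Psi> at_top at_top"
    and \<Psi>_reg_inner: "\<forall>\<^sub>F \<delta> in at 1. ((\<lambda>t. \<Psi> (\<delta> * t) / \<Psi> t) \<longlongrightarrow> L \<delta>) at_top"
    and \<Psi>_reg_outer: "(L \<longlongrightarrow> 1) (at 1)"
    and I_pos: "\<And>i j. i \<le> N \<Longrightarrow> j \<le> N \<Longrightarrow> i \<noteq> j \<Longrightarrow> I i j > 0"
    and r_ge: "r \<ge> 1"
    and r_complete: "\<And>i j \<epsilon>. i \<le> N \<Longrightarrow> j \<le> N \<Longrightarrow> i \<noteq> j \<Longrightarrow> \<epsilon> > 0 \<Longrightarrow>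
        summable (\<lambda>t. real (Suc t) powr (r - 1) *
          measure (P i) {\<omega> \<in> space M. \<bar>lam i j (Suc t) \<omega> / \<psi> (real (Suc t)) - I i j\<bar> > \<epsilon>})"
    and \<alpha>_range: "\<And>k i j. i \<le> N \<Longrightarrow> j \<le> N \<Longrightarrow> i \<noteq> j \<Longrightarrow> 0 < \<alpha> k i j \<and> \<alpha> k i j < 1"
    and \<alpha>max_def: "\<alpha>max = (\<lambda>k. Max {\<alpha> k i j | i j. i \<le> N \<and> j \<le> N \<and> i \<noteq> j})"
    and \<alpha>max_lim: "\<alpha>max \<longlonglongrightarrow> 0"
    and a_asymp: "\<And>i j. i \<le> N \<Longrightarrow> j \<le> N \<Longrightarrow> i \<noteq> j \<Longrightarrow>
        (\<lambda>k. a k j i / ln (1 / \<alpha> k j i)) \<longlonglongrightarrow> 1"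
    and d_msprt: "\<And>k. msprt_decision M F N lam (a k) (d k)"
    and msprt_err: "\<And>k i j. i \<le> N \<Longrightarrow> j \<le> N \<Longrightarrow> i \<noteq> j \<Longrightarrow>
        measure (P i) {\<omega> \<in> space M. d k \<omega> = j} \<le> \<alpha> k i j"
begin

lemma Psi_pos: "x > 0 \<Longrightarrow> \<Psi> x > 0"
  using \<psi>_bij unfolding \<Psi>_def
  by (metis bij_betw_def greaterThan_iff order_refl the_inv_into_into)

lemma psi_Psi: "x > 0 \<Longrightarrow> \<psi> (\<Psi> x) = x"
  using \<psi>_bij unfolding \<Psi>_def by (simp add: f_the_inv_into_f_bij_betw)

lemma le_Psi_iff: "t > 0 \<Longrightarrow> x > 0 \<Longrightarrow> t \<le> \<Psi> x \<longleftrightarrow> \<psi> t \<le> \<psi> (\<Psi> x)"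
  using \<psi>_mono Psi_pos[of x] by (simp add: strict_mono_on_leD strict_mono_on_less_eq)

lemma psi_le: "t > 0 \<Longrightarrow> x > 0 \<Longrightarrow> t \<le> \<Psi> x \<Longrightarrow> \<psi> t \<le> x"
  using le_Psi_iff psi_Psi by auto

lemma psi_ge: "t > 0 \<Longrightarrow> x > 0 \<Longrightarrow> \<Psi> x \<le> t \<Longrightarrow> x \<le> \<psi> t"
  using \<psi>_mono Psi_pos[of x] psi_Psi[of x]
  by (metis greaterThan_iff strict_mono_on_leD)

lemma Psi_mono: "0 < x \<Longrightarrow> x \<le> y \<Longrightarrow> \<Psi> x \<le> \<Psi> y"
  using le_Psi_iff[of "\<Psi> x" y] Psi_pos psi_Psi by auto

lemma space_P: "i \<le> N \<Longrightarrow> space (P i) = space M"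
  using P_sets sets_eq_imp_space_eq by blast

lemma subalg: "i \<le> N \<Longrightarrow> subalgebra (P i) (F n)"
  unfolding subalgebra_def using F_space F_sets P_sets space_P by auto

lemma meas_F: "f \<in> borel_measurable (F n) \<Longrightarrow> f \<in> borel_measurable (\<mu> n)"
  using \<mu>_sets measurable_cong_sets by blast

lemma lam_meas: "i \<le> N \<Longrightarrow> j \<le> N \<Longrightarrow> lam i j n \<in> borel_measurable (F n)"
  using p_meas[of i n] p_meas[of j n] unfolding lam_def by measurable

lemma P_dens_eq: assumes "i \<le> N" "A \<in> sets (F n)"
  shows "emeasure (P i) A = (\<integral>\<^sup>+ x. ennreal (p i n x) * indicator A x \<partial>\<mu> n)"
proof -
  have "emeasure (P i) A = emeasure (restr_to_subalg (P i) (F n)) A"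
    using emeasure_restr_to_subalg[OF subalg[OF assms(1)] assms(2)] by simp
  also have "\<dots> = (\<integral>\<^sup>+ x. ennreal (p i n x) * indicator A x \<partial>\<mu> n)"
    unfolding p_dens[OF assms(1)]
    by (rule emeasure_density) (use meas_F[OF p_meas[OF assms(1)]] \<mu>_sets assms in auto)
  finally show ?thesis .
qed

lemma change_measure:
  assumes i: "i \<le> N" and j: "j \<le> N" and A: "A \<in> sets (F n)"
  shows "emeasure (P i) (A \<inter> {\<omega>\<in>space M. lam i j n \<omega> < b}) \<le> ennreal (exp b) * emeasure (P j) A"
proof -
  define E where "E = A \<inter> {\<omega>\<in>space M. lam i j n \<omega> < b}"
  have Esp: "{\<omega>\<in>space M. lam i j n \<omega> < b} = {\<omega>\<in>space (F n). lam i j n \<omega> < b}"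
    using F_space by simp
  have E: "E \<in> sets (F n)" unfolding E_def Esp using lam_meas[OF i j] A by measurable
  define Z where "Z = E \<inter> {\<omega>\<in>space M. p j n \<omega> = 0}"
  have Zsp: "{\<omega>\<in>space M. p j n \<omega> = 0} = {\<omega>\<in>space (F n). p j n \<omega> = 0}"
    using F_space by simp
  have Z: "Z \<in> sets (F n)" unfolding Z_def Zsp using p_meas[OF j] E by measurable
  have EZ: "E - Z \<in> sets (F n)" using E Z by auto
  have "emeasure (P j) Z = (\<integral>\<^sup>+ x. ennreal (p j n x) * indicator Z x \<partial>\<mu> n)"
    using P_dens_eq[OF j Z] .
  also have "\<dots> = (\<integral>\<^sup>+ x. 0 \<partial>\<mu> n)"
    by (rule nn_integral_cong) (auto simp: Z_def indicator_def)
  finally have "emeasure (P j) Z = 0" by simp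
  then have "Z \<in> null_sets (restr_to_subalg (P j) (F n))"
    using null_sets_restr_to_subalg[OF subalg[OF j]] Z P_sets[OF j] F_sets[of n] by (auto intro!: null_setsI)
  then have "Z \<in> null_sets (restr_to_subalg (P i) (F n))"
    using mutual_ac[OF j i, of n] unfolding absolutely_continuous_def by auto
  then have Zi: "emeasure (P i) Z = 0"
    using null_sets_restr_to_subalg[OF subalg[OF i]] by auto
  have "emeasure (P i) E \<le> emeasure (P i) (E - Z) + emeasure (P i) Z"
  proof -
    have "E \<subseteq> (E - Z) \<union> Z" by auto
    moreover have "E - Z \<in> sets (P i)" "Z \<in> sets (P i)" using P_sets[OF i] F_sets E Z by auto
    ultimately show ?thesis
      by (metis emeasure_mono emeasure_subadditive order_trans sets.Un)
  qed
  also have "\<dots> = emeasure (P i) (E - Z)" using Zi by simp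
  also have "\<dots> = (\<integral>\<^sup>+ x. ennreal (p i n x) * indicator (E - Z) x \<partial>\<mu> n)"
    using P_dens_eq[OF i EZ] .
  also have "\<dots> \<le> (\<integral>\<^sup>+ x. ennreal (exp b) * (ennreal (p j n x) * indicator (E - Z) x) \<partial>\<mu> n)"
  proof (rule nn_integral_mono)
    fix x
    show "ennreal (p i n x) * indicator (E - Z) x \<le> ennreal (exp b) * (ennreal (p j n x) * indicator (E - Z) x)"
    proof (cases "x \<in> E - Z")
      case True
      then have xs: "x \<in> space M" and pj: "p j n x \<noteq> 0" and lt: "ln (p i n x / p j n x) < b"
        by (auto simp: E_def Z_def lam_def)
      have pj': "p j n x > 0" using pj p_nonneg[OF j] by (simp add: order_le_neq_trans)
      have "p i n x \<le> exp b * p j n x"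
      proof (cases "p i n x = 0")
        case True then show ?thesis using pj' by simp
      next
        case False
        then have "p i n x > 0" using p_nonneg[OF i] by (simp add: order_le_neq_trans)
        then have "p i n x / p j n x < exp b" using lt pj'
          by (metis divide_pos_pos exp_less_cancel_iff exp_ln)
        then show ?thesis using pj' by (simp add: divide_less_eq less_imp_le)
      qed
      then show ?thesis using True p_nonneg[OF j] by (simp add: ennreal_mult[symmetric])
    qed simp
  qed
  also have "\<dots> = ennreal (exp b) * (\<integral>\<^sup>+ x. ennreal (p j n x) * indicator (E - Z) x \<partial>\<mu> n)"
  proof (rule nn_integral_cmult)
    have [measurable]: "p j n \<in> borel_measurable (\<mu> n)" "E - Z \<in> sets (\<mu> n)"
      using meas_F[OF p_meas[OF j]] EZ \<mu>_sets by auto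
    show "(\<lambda>x. ennreal (p j n x) * indicator (E - Z) x) \<in> borel_measurable (\<mu> n)" by measurable
  qed
  also have "\<dots> = ennreal (exp b) * emeasure (P j) (E - Z)"
    using P_dens_eq[OF j EZ] by simp
  also have "\<dots> \<le> ennreal (exp b) * emeasure (P j) A"
    using P_sets[OF j] F_sets A by (intro mult_left_mono emeasure_mono) (auto simp: E_def)
  finally show ?thesis unfolding E_def .
qed

lemma stop_set: assumes "is_stopping_time F T"
  shows "{\<omega>\<in>space M. T \<omega> \<le> enat n} \<in> sets M"
  using assms F_sets F_space unfolding is_stopping_time_def by (metis subsetD)

lemma mom_lower:
  assumes i: "i \<le> N" and st: "is_stopping_time F T"
  shows "mom (P i) r T \<ge> ennreal (real (Suc n) powr r * (1 - measure (P i) {\<omega>\<in>space M. T \<omega> \<le> enat n}))"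
proof -
  interpret Pi: prob_space "P i" using P_prob[OF i] .
  define S where "S = {\<omega>\<in>space M. T \<omega> \<le> enat n}"
  have S: "S \<in> sets (P i)" using stop_set[OF st] P_sets[OF i] by (simp add: S_def)
  have C: "space M - S \<in> sets (P i)" using S space_P[OF i] by (metis sets.compl_sets)
  have "mom (P i) r T \<ge> (\<integral>\<^sup>+ \<omega>. ennreal (real (Suc n) powr r) * indicator (space M - S) \<omega> \<partial>P i)"
    unfolding mom_def
  proof (rule nn_integral_mono)
    fix \<omega> show "ennreal (real (Suc n) powr r) * indicator (space M - S) \<omega> \<le> tpow r (T \<omega>)"
    proof (cases "\<omega> \<in> space M - S")
      case True
      then have "\<not> T \<omega> \<le> enat n" by (auto simp: S_def)
      then show ?thesis
      proof (cases "T \<omega>")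
        case (enat m)
        then have "Suc n \<le> m" using \<open>\<not> T \<omega> \<le> enat n\<close> by auto
        then have "real (Suc n) powr r \<le> real m powr r" using r_ge by (intro powr_mono2) auto
        then show ?thesis using True enat by (simp add: tpow_def)
      qed (simp add: tpow_def)
    qed simp
  qed
  also have "(\<integral>\<^sup>+ \<omega>. ennreal (real (Suc n) powr r) * indicator (space M - S) \<omega> \<partial>P i)
      = ennreal (real (Suc n) powr r) * emeasure (P i) (space M - S)"
    using C by (rule nn_integral_cmult_indicator)
  also have "emeasure (P i) (space M - S) = ennreal (1 - measure (P i) S)"
    using Pi.prob_compl[OF S] space_P[OF i] Pi.emeasure_eq_measure C by simp
  finally show ?thesis unfolding S_def by (simp add: ennreal_mult)
qed

lemma Csim_bound:
  assumes i: "i \<le> N" and D: "(T, dd) \<in> Csim M F P N \<alpha>'" and j: "j \<le> N" "j \<noteq> i"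
  shows "measure (P i) {\<omega>\<in>space M. T \<omega> \<le> enat n} \<le>
     (\<Sum>j'\<in>{..N}-{i}. \<alpha>' i j') + exp b * \<alpha>' j i + measure (P i) {\<omega>\<in>space M. b \<le> lam i j n \<omega>}"
proof -
  interpret Pi: prob_space "P i" using P_prob[OF i] .
  interpret Pj: prob_space "P j" using P_prob[OF j(1)] .
  have st: "is_stopping_time F T" and dec: "is_FT_decision M F T N dd"
    and err: "\<And>i j. i \<le> N \<Longrightarrow> j \<le> N \<Longrightarrow> i \<noteq> j \<Longrightarrow> measure (P i) {\<omega> \<in> space M. dd \<omega> = j} \<le> \<alpha>' i j"
    using D unfolding Csim_def by auto
  define S where "S = {\<omega>\<in>space M. T \<omega> \<le> enat n}"
  define D where "D j' = {\<omega>\<in>space M. dd \<omega> = j'}" for j'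
  define E where "E = {\<omega>\<in>space M. dd \<omega> = i \<and> T \<omega> \<le> enat n}"
  define Lb where "Lb = {\<omega>\<in>space M. lam i j n \<omega> < b}"
  define Gb where "Gb = {\<omega>\<in>space M. b \<le> lam i j n \<omega>}"
  have EF: "E \<in> sets (F n)" using dec unfolding is_FT_decision_def E_def by blast
  have Dm: "D j' \<in> sets M" for j' using dec unfolding is_FT_decision_def D_def by blast
  have Gsp: "Gb = {\<omega>\<in>space (F n). b \<le> lam i j n \<omega>}" using F_space by (simp add: Gb_def)
  have GF: "Gb \<in> sets (F n)" unfolding Gsp using lam_meas[OF i j(1)] by measurable
  have Em: "E \<in> sets M" "Gb \<in> sets M" using EF GF F_sets by auto
  have Lsp: "Lb = {\<omega>\<in>space (F n). lam i j n \<omega> < b}" using F_space by (simp add: Lb_def)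
  have LF: "Lb \<in> sets (F n)" unfolding Lsp using lam_meas[OF i j(1)] by measurable
  have ELm: "E \<inter> Lb \<in> sets M" using EF LF F_sets by auto
  have Um: "(\<Union>j'\<in>{..N}-{i}. D j') \<in> sets M" using Dm by auto
  have sub: "S \<subseteq> (\<Union>j'\<in>{..N}-{i}. D j') \<union> (E \<inter> Lb) \<union> Gb"
  proof
    fix \<omega> assume w: "\<omega> \<in> S"
    then have "dd \<omega> \<le> N" using dec unfolding is_FT_decision_def S_def by auto
    then show "\<omega> \<in> (\<Union>j'\<in>{..N}-{i}. D j') \<union> (E \<inter> Lb) \<union> Gb"
      using w by (cases "dd \<omega> = i") (auto simp: S_def D_def E_def Lb_def Gb_def)
  qed
  have "measure (P i) S \<le> measure (P i) ((\<Union>j'\<in>{..N}-{i}. D j') \<union> (E \<inter> Lb) \<union> Gb)"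
    using sub Um ELm Em P_sets[OF i] by (intro Pi.finite_measure_mono) auto
  also have "\<dots> \<le> measure (P i) ((\<Union>j'\<in>{..N}-{i}. D j') \<union> (E \<inter> Lb)) + measure (P i) Gb"
    using Um ELm Em P_sets[OF i] by (intro measure_subadditive Pi.emeasure_finite) auto
  also have "measure (P i) ((\<Union>j'\<in>{..N}-{i}. D j') \<union> (E \<inter> Lb)) \<le>
      measure (P i) (\<Union>j'\<in>{..N}-{i}. D j') + measure (P i) (E \<inter> Lb)"
    using Um ELm Em P_sets[OF i] by (intro measure_subadditive Pi.emeasure_finite) auto
  also have "measure (P i) (\<Union>j'\<in>{..N}-{i}. D j') \<le> (\<Sum>j'\<in>{..N}-{i}. measure (P i) (D j'))"
    using Dm P_sets[OF i] by (intro Pi.finite_measure_subadditive_finite) auto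
  also have "\<dots> \<le> (\<Sum>j'\<in>{..N}-{i}. \<alpha>' i j')"
    using err[OF i] by (intro sum_mono) (auto simp: D_def)
  also have "measure (P i) (E \<inter> Lb) \<le> exp b * \<alpha>' j i"
  proof -
    have "emeasure (P i) (E \<inter> Lb) \<le> ennreal (exp b) * emeasure (P j) E"
      using change_measure[OF i j(1) EF] unfolding Lb_def .
    also have "emeasure (P j) E \<le> emeasure (P j) (D i)"
      using Dm P_sets[OF j(1)] by (intro emeasure_mono) (auto simp: E_def D_def)
    finally have "emeasure (P i) (E \<inter> Lb) \<le> ennreal (exp b) * emeasure (P j) (D i)"
      by (simp add: mult_left_mono)
    then have "measure (P i) (E \<inter> Lb) \<le> exp b * measure (P j) (D i)"
      using Pi.emeasure_eq_measure Pj.emeasure_eq_measure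
      by (simp add: ennreal_mult[symmetric])
    also have "\<dots> \<le> exp b * \<alpha>' j i"
      using err[OF j(1) i] j by (auto simp: D_def)
    finally show ?thesis .
  qed
  finally show ?thesis unfolding S_def Gb_def by linarith
qed

lemma msprt_Csim: "(msprt_T N lam (a k), d k) \<in> Csim M F P N (\<alpha> k)"
proof -
  have dec: "is_FT_decision M F (msprt_T N lam (a k)) N (d k)"
    using d_msprt[of k] unfolding msprt_decision_def by auto
  have "is_stopping_time F (msprt_T N lam (a k))"
    unfolding is_stopping_time_def
  proof
    fix n
    have "{\<omega>\<in>space (F n). msprt_T N lam (a k) \<omega> \<le> enat n} =
        (\<Union>j\<in>{..N}. {\<omega>\<in>space M. d k \<omega> = j \<and> msprt_T N lam (a k) \<omega> \<le> enat n})"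
      using dec F_space unfolding is_FT_decision_def by auto
    also have "\<dots> \<in> sets (F n)" using dec unfolding is_FT_decision_def by auto
    finally show "{\<omega>\<in>space (F n). msprt_T N lam (a k) \<omega> \<le> enat n} \<in> sets (F n)" .
  qed
  then show ?thesis unfolding Csim_def using dec msprt_err by auto
qed

lemma psi_pos: "t > 0 \<Longrightarrow> \<psi> t > 0"
  using \<psi>_bij unfolding bij_betw_def by auto

lemma pow_diff_le:
  assumes x: "x \<ge> 1"
  shows "(x + 1) powr r - x powr r \<le> r * 2 powr (r - 1) * x powr (r - 1)"
proof -
  obtain z where z: "x < z" "z < x + 1" "(x + 1) powr r - x powr r = ((x + 1) - x) * (r * z powr (r - 1))"
  proof -
    have "\<And>y. x \<le> y \<Longrightarrow> y \<le> x + 1 \<Longrightarrow> ((\<lambda>z. z powr r) has_real_derivative r * y powr (r - 1)) (at y)"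
      using x by (intro has_real_derivative_powr) auto
    then have "\<exists>z. x < z \<and> z < x + 1 \<and> (x + 1) powr r - x powr r = ((x + 1) - x) * (r * z powr (r - 1))"
      by (intro MVT2) auto
    then show ?thesis using that by blast
  qed
  have "z powr (r - 1) \<le> (2 * x) powr (r - 1)"
    using z x r_ge by (intro powr_mono2) auto
  also have "\<dots> = 2 powr (r - 1) * x powr (r - 1)" using x by (simp add: powr_mult)
  finally have "r * z powr (r - 1) \<le> r * (2 powr (r - 1) * x powr (r - 1))"
    using r_ge by (intro mult_left_mono) auto
  then show ?thesis using z(3) by simp
qed

definition "dev i j e m = {\<omega>\<in>space M. e < \<bar>lam i j m \<omega> / \<psi> (real m) - I i j\<bar>}"

lemma dev_sets: "i \<le> N \<Longrightarrow> j \<le> N \<Longrightarrow> dev i j e m \<in> sets M"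
proof -
  assume ij: "i \<le> N" "j \<le> N"
  have "dev i j e m = {\<omega>\<in>space (F m). e < \<bar>lam i j m \<omega> / \<psi> (real m) - I i j\<bar>}"
    using F_space by (simp add: dev_def)
  also have "\<dots> \<in> sets (F m)" using lam_meas[OF ij] by measurable
  finally show ?thesis using F_sets by auto
qed


lemma mom_upper:
  assumes i: "i \<le> N" and e: "0 < e" "e < 1" and n0: "n0 \<ge> 1"
    and H: "\<And>n j. n \<ge> n0 \<Longrightarrow> j \<le> N \<Longrightarrow> j \<noteq> i \<Longrightarrow> a k j i \<le> (1 - e) * I i j * \<psi> (real n)"
  shows "mom (P i) r (msprt_T N lam (a k)) \<le> ennreal (real n0 powr r + r * 2 powr (r - 1) *
     (\<Sum>j\<in>{..N}-{i}. (\<Sum>t. real (Suc t) powr (r - 1) * measure (P i) (dev i j (e * I i j) (Suc t)))))"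
proof -
  interpret Pi: prob_space "P i" using P_prob[OF i] .
  define Bad where "Bad m = (\<Union>j\<in>{..N}-{i}. {\<omega>\<in>space M. lam i j m \<omega> < a k j i})" for m
  define Bad' where "Bad' t = (if n0 \<le> Suc t then Bad (Suc t) else {})" for t
  define c where "c t = real (Suc (Suc t)) powr r - real (Suc t) powr r" for t
  define h where "h \<omega> = ennreal (real n0 powr r) + (\<Sum>t. ennreal (c t) * indicator (Bad' t) \<omega>)" for \<omega>
  define g where "g j t = real (Suc t) powr (r - 1) * measure (P i) (dev i j (e * I i j) (Suc t))" for j t
  have sg: "summable (g j)" if "j \<in> {..N}-{i}" for j
  proof -
    have "summable (\<lambda>t. g j t)"
      using r_complete[OF i, of j "e * I i j"] I_pos[OF i, of j] e that by (auto simp: g_def dev_def)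
    then show ?thesis by simp
  qed
  have c_nn: "c t \<ge> 0" for t unfolding c_def using r_ge by (intro diff_ge_0_iff_ge[THEN iffD2] powr_mono2) auto
  have Bad_sets: "Bad m \<in> sets M" for m
  proof -
    have "{\<omega>\<in>space M. lam i j m \<omega> < a k j i} \<in> sets M" if "j \<le> N" for j
    proof -
      have "{\<omega>\<in>space M. lam i j m \<omega> < a k j i} = {\<omega>\<in>space (F m). lam i j m \<omega> < a k j i}"
        using F_space by simp
      also have "\<dots> \<in> sets (F m)" using lam_meas[OF i that] by measurable
      finally show ?thesis using F_sets by auto
    qed
    then show ?thesis unfolding Bad_def by auto
  qed
  have Bad'_sets: "Bad' t \<in> sets (P i)" for t using Bad_sets P_sets[OF i] by (auto simp: Bad'_def)
  have key: "ennreal (real m powr r) \<le> h \<omega>" if B: "\<And>n. 1 \<le> n \<Longrightarrow> n < m \<Longrightarrow> \<omega> \<in> Bad n" for m \<omega>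
  proof (cases "m \<le> n0")
    case True
    then have "ennreal (real m powr r) \<le> ennreal (real n0 powr r)"
      using r_ge by (intro ennreal_leI powr_mono2) auto
    also have "\<dots> \<le> h \<omega>" unfolding h_def by simp
    finally show ?thesis .
  next
    case False
    have "(\<Sum>t\<in>{n0-1..<m-1}. ennreal (c t) * indicator (Bad' t) \<omega>) = (\<Sum>t\<in>{n0-1..<m-1}. ennreal (c t))"
    proof (rule sum.cong)
      fix t assume t: "t \<in> {n0-1..<m-1}"
      then have "\<omega> \<in> Bad' t" using B[of "Suc t"] n0 False by (auto simp: Bad'_def)
      then show "ennreal (c t) * indicator (Bad' t) \<omega> = ennreal (c t)" by simp
    qed simp
    also have "\<dots> = ennreal (\<Sum>t\<in>{n0-1..<m-1}. c t)" using c_nn by simp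
    also have "(\<Sum>t\<in>{n0-1..<m-1}. c t) = real m powr r - real n0 powr r"
    proof -
      have "(\<Sum>t\<in>{n0-1..<m-1}. c t) = (\<Sum>t\<in>{n0-1..<m-1}. (\<lambda>t. real (Suc t) powr r) (Suc t) - (\<lambda>t. real (Suc t) powr r) t)"
        unfolding c_def by simp
      also have "\<dots> = real (Suc (m-1)) powr r - real (Suc (n0-1)) powr r"
        by (rule sum_Suc_diff') (use False in auto)
      finally show ?thesis using False n0 by simp
    qed
    finally have S: "(\<Sum>t\<in>{n0-1..<m-1}. ennreal (c t) * indicator (Bad' t) \<omega>) = ennreal (real m powr r - real n0 powr r)" .
    have "(\<Sum>t\<in>{n0-1..<m-1}. ennreal (c t) * indicator (Bad' t) \<omega>) \<le> (\<Sum>t. ennreal (c t) * indicator (Bad' t) \<omega>)"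
      by (rule sum_le_suminf) (auto intro: summableI)
    then have "ennreal (real n0 powr r) + ennreal (real m powr r - real n0 powr r) \<le> h \<omega>"
      unfolding h_def S by (rule add_left_mono)
    moreover have "ennreal (real n0 powr r) + ennreal (real m powr r - real n0 powr r) = ennreal (real m powr r)"
    proof -
      have "real n0 powr r \<le> real m powr r" using False r_ge by (intro powr_mono2) auto
      then show ?thesis by (subst ennreal_plus[symmetric]) auto
    qed
    ultimately show ?thesis by simp
  qed
  have pw: "tpow r (msprt_T N lam (a k) \<omega>) \<le> h \<omega>" if w: "\<omega> \<in> space M" for \<omega>
  proof -
    let ?Ti = "msprt_Ti N lam (a k) i \<omega>"
    have TTi: "msprt_T N lam (a k) \<omega> \<le> ?Ti" unfolding msprt_T_def using i by (intro Min_le) auto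
    show ?thesis
    proof (cases "\<exists>n\<ge>1. \<forall>j\<le>N. j \<noteq> i \<longrightarrow> lam i j n \<omega> \<ge> a k j i")
      case True
      define m where "m = (LEAST n. n \<ge> 1 \<and> (\<forall>j\<le>N. j \<noteq> i \<longrightarrow> lam i j n \<omega> \<ge> a k j i))"
      have Ti: "?Ti = enat m" using True unfolding msprt_Ti_def m_def by simp
      have B: "\<omega> \<in> Bad n" if "1 \<le> n" "n < m" for n
      proof -
        have "\<not> (n \<ge> 1 \<and> (\<forall>j\<le>N. j \<noteq> i \<longrightarrow> lam i j n \<omega> \<ge> a k j i))"
          using not_less_Least[OF that(2)[unfolded m_def]] .
        then show ?thesis using that w by (auto simp: Bad_def not_le)
      qed
      obtain m' where m': "msprt_T N lam (a k) \<omega> = enat m'" "m' \<le> m" using TTi Ti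
        by (cases "msprt_T N lam (a k) \<omega>") auto
      have "tpow r (msprt_T N lam (a k) \<omega>) = ennreal (real m' powr r)" using m' by (simp add: tpow_def)
      also have "\<dots> \<le> ennreal (real m powr r)" using m' r_ge by (intro ennreal_leI powr_mono2) auto
      also have "\<dots> \<le> h \<omega>" using key[OF B] by blast
      finally show ?thesis .
    next
      case False
      have B: "\<omega> \<in> Bad n" if "1 \<le> n" for n
      proof -
        have "\<exists>j\<le>N. j \<noteq> i \<and> lam i j n \<omega> < a k j i" using False that by (metis not_le)
        then show ?thesis using w by (auto simp: Bad_def)
      qed
      have "h \<omega> = top"
      proof (rule ccontr)
        assume "h \<omega> \<noteq> top"
        then obtain x where x: "h \<omega> = ennreal x" "x \<ge> 0" by (cases "h \<omega>") auto
        define m where "m = Suc (nat \<lceil>x\<rceil>)"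
        have "ennreal (real m powr r) \<le> ennreal x" using key[of m \<omega>] B x by auto
        then have "real m powr r \<le> x" using x by (simp add: ennreal_le_iff)
        moreover have "real m \<le> real m powr r"
        proof -
          have m1: "1 \<le> real m" unfolding m_def by simp
          have "real m powr 1 \<le> real m powr r" by (rule powr_mono[OF r_ge m1])
          then show ?thesis using m1 by simp
        qed
        moreover have "x < real m" unfolding m_def by linarith
        ultimately show False by linarith
      qed
      then show ?thesis by simp
    qed
  qed
  have "mom (P i) r (msprt_T N lam (a k)) \<le> (\<integral>\<^sup>+ \<omega>. h \<omega> \<partial>P i)"
    unfolding mom_def using pw space_P[OF i] by (intro nn_integral_mono) auto
  also have "(\<integral>\<^sup>+ \<omega>. h \<omega> \<partial>P i) = ennreal (real n0 powr r) + (\<Sum>t. ennreal (c t) * emeasure (P i) (Bad' t))"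
  proof -
    have [measurable]: "Bad' t \<in> sets (P i)" for t using Bad'_sets .
    have "(\<integral>\<^sup>+ \<omega>. h \<omega> \<partial>P i) = (\<integral>\<^sup>+ \<omega>. ennreal (real n0 powr r) \<partial>P i) +
        (\<integral>\<^sup>+ \<omega>. (\<Sum>t. ennreal (c t) * indicator (Bad' t) \<omega>) \<partial>P i)"
      unfolding h_def by (rule nn_integral_add) measurable
    also have "(\<integral>\<^sup>+ \<omega>. (\<Sum>t. ennreal (c t) * indicator (Bad' t) \<omega>) \<partial>P i) =
        (\<Sum>t. (\<integral>\<^sup>+ \<omega>. ennreal (c t) * indicator (Bad' t) \<omega> \<partial>P i))"
      by (rule nn_integral_suminf) measurable
    also have "\<dots> = (\<Sum>t. ennreal (c t) * emeasure (P i) (Bad' t))"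
      by (intro suminf_cong nn_integral_cmult_indicator Bad'_sets)
    finally show ?thesis using Pi.emeasure_space_1 by simp
  qed
  also have "(\<Sum>t. ennreal (c t) * emeasure (P i) (Bad' t)) \<le>
      (\<Sum>t. ennreal (r * 2 powr (r - 1) * (\<Sum>j\<in>{..N}-{i}. g j t)))"
  proof (intro suminf_le summableI)
    fix t
    show "ennreal (c t) * emeasure (P i) (Bad' t) \<le> ennreal (r * 2 powr (r - 1) * (\<Sum>j\<in>{..N}-{i}. g j t))"
    proof (cases "n0 \<le> Suc t")
      case False then show ?thesis by (simp add: Bad'_def)
    next
      case True
      have sub: "Bad (Suc t) \<subseteq> (\<Union>j\<in>{..N}-{i}. dev i j (e * I i j) (Suc t))"
      proof
        fix \<omega> assume "\<omega> \<in> Bad (Suc t)"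
        then obtain j where j: "j \<le> N" "j \<noteq> i" "\<omega> \<in> space M" "lam i j (Suc t) \<omega> < a k j i"
          by (auto simp: Bad_def)
        have ps: "\<psi> (real (Suc t)) > 0" by (rule psi_pos) simp
        have "lam i j (Suc t) \<omega> < (1 - e) * I i j * \<psi> (real (Suc t))"
          using j(4) H[OF True j(1,2)] by linarith
        then have "lam i j (Suc t) \<omega> / \<psi> (real (Suc t)) < (1 - e) * I i j"
          using ps by (simp add: divide_less_eq)
        then have "e * I i j < \<bar>lam i j (Suc t) \<omega> / \<psi> (real (Suc t)) - I i j\<bar>"
          by (simp add: algebra_simps)
        then show "\<omega> \<in> (\<Union>j\<in>{..N}-{i}. dev i j (e * I i j) (Suc t))"
          using j by (auto simp: dev_def)
      qed
      have "measure (P i) (Bad (Suc t)) \<le> measure (P i) (\<Union>j\<in>{..N}-{i}. dev i j (e * I i j) (Suc t))"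
        using sub dev_sets i P_sets[OF i] by (intro Pi.finite_measure_mono) auto
      also have "\<dots> \<le> (\<Sum>j\<in>{..N}-{i}. measure (P i) (dev i j (e * I i j) (Suc t)))"
        using dev_sets i P_sets[OF i] by (intro Pi.finite_measure_subadditive_finite) auto
      finally have mB: "measure (P i) (Bad (Suc t)) \<le> (\<Sum>j\<in>{..N}-{i}. measure (P i) (dev i j (e * I i j) (Suc t)))" .
      have ct: "c t \<le> r * 2 powr (r - 1) * real (Suc t) powr (r - 1)"
        using pow_diff_le[of "real (Suc t)"] unfolding c_def by (simp add: add.commute)
      have "c t * measure (P i) (Bad (Suc t)) \<le> (r * 2 powr (r - 1) * real (Suc t) powr (r - 1)) *
            (\<Sum>j\<in>{..N}-{i}. measure (P i) (dev i j (e * I i j) (Suc t)))"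
      proof (rule mult_mono[OF ct mB])
        have "0 \<le> r" using r_ge by linarith
        then show "0 \<le> r * 2 powr (r - 1) * real (Suc t) powr (r - 1)" by simp
        show "0 \<le> measure (P i) (Bad (Suc t))" by simp
      qed
      also have "\<dots> = r * 2 powr (r - 1) * (\<Sum>j\<in>{..N}-{i}. g j t)"
        unfolding g_def by (simp add: sum_distrib_left mult.assoc)
      finally have "c t * measure (P i) (Bad (Suc t)) \<le> r * 2 powr (r - 1) * (\<Sum>j\<in>{..N}-{i}. g j t)" .
      then show ?thesis using True c_nn Pi.emeasure_eq_measure
        by (simp add: Bad'_def ennreal_mult[symmetric] ennreal_leI)
    qed
  qed
  also have "\<dots> = ennreal (\<Sum>t. r * 2 powr (r - 1) * (\<Sum>j\<in>{..N}-{i}. g j t))"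
  proof (rule suminf_ennreal2)
    show "0 \<le> r * 2 powr (r - 1) * (\<Sum>j\<in>{..N}-{i}. g j t)" for t
    proof -
      have "0 \<le> r" using r_ge by linarith
      then show ?thesis by (auto intro!: mult_nonneg_nonneg sum_nonneg simp: g_def)
    qed
    show "summable (\<lambda>t. r * 2 powr (r - 1) * (\<Sum>j\<in>{..N}-{i}. g j t))"
      using r_complete[OF i] I_pos[OF i] e
      by (intro summable_mult summable_sum) (auto simp: g_def dev_def)
  qed
  also have "(\<Sum>t. r * 2 powr (r - 1) * (\<Sum>j\<in>{..N}-{i}. g j t)) = r * 2 powr (r - 1) * (\<Sum>j\<in>{..N}-{i}. suminf (g j))"
  proof -
    have "(\<Sum>t. r * 2 powr (r - 1) * (\<Sum>j\<in>{..N}-{i}. g j t)) = r * 2 powr (r - 1) * (\<Sum>t. (\<Sum>j\<in>{..N}-{i}. g j t))"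
      by (rule suminf_mult) (auto intro!: summable_sum sg)
    also have "(\<Sum>t. (\<Sum>j\<in>{..N}-{i}. g j t)) = (\<Sum>j\<in>{..N}-{i}. suminf (g j))"
      using suminf_sum[of "{..N}-{i}" g, OF sg] by simp
    finally show ?thesis .
  qed
  finally have A: "mom (P i) r (msprt_T N lam (a k)) \<le> ennreal (real n0 powr r) + ennreal (r * 2 powr (r - 1) * (\<Sum>j\<in>{..N}-{i}. suminf (g j)))"
    by (auto intro: add_left_mono)
  show ?thesis
  proof -
    have "0 \<le> r * 2 powr (r - 1) * (\<Sum>j\<in>{..N}-{i}. suminf (g j))"
    proof -
      have "0 \<le> r" using r_ge by linarith
      moreover have "0 \<le> suminf (g j)" if "j \<in> {..N}-{i}" for j
        using sg[OF that] by (intro suminf_nonneg) (auto simp: g_def)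
      ultimately show ?thesis by (intro mult_nonneg_nonneg sum_nonneg) auto
    qed
    then have "ennreal (real n0 powr r) + ennreal (r * 2 powr (r - 1) * (\<Sum>j\<in>{..N}-{i}. suminf (g j)))
        = ennreal (real n0 powr r + r * 2 powr (r - 1) * (\<Sum>j\<in>{..N}-{i}. suminf (g j)))"
      by (intro ennreal_plus[symmetric]) auto
    moreover have "(\<Sum>j\<in>{..N}-{i}. suminf (g j)) = (\<Sum>j\<in>{..N}-{i}. (\<Sum>t. real (Suc t) powr (r - 1) * measure (P i) (dev i j (e * I i j) (Suc t))))"
      by (intro sum.cong refl arg_cong[where f=suminf] ext) (simp add: g_def)
    ultimately show ?thesis using A by simp
  qed
qed



lemma alpha_le_max: "i \<le> N \<Longrightarrow> j \<le> N \<Longrightarrow> i \<noteq> j \<Longrightarrow> \<alpha> k i j \<le> \<alpha>max k"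
proof -
  assume ij: "i \<le> N" "j \<le> N" "i \<noteq> j"
  have fin: "finite {\<alpha> k i j | i j. i \<le> N \<and> j \<le> N \<and> i \<noteq> j}"
  proof (rule finite_subset)
    show "{\<alpha> k i j | i j. i \<le> N \<and> j \<le> N \<and> i \<noteq> j} \<subseteq> (\<lambda>(i,j). \<alpha> k i j) ` ({..N} \<times> {..N})" by force
  qed simp
  show ?thesis unfolding \<alpha>max_def using ij by (intro Max_ge[OF fin]) blast
qed

lemma alpha_lim: assumes "i \<le> N" "j \<le> N" "i \<noteq> j" shows "(\<lambda>k. \<alpha> k i j) \<longlonglongrightarrow> 0"
proof (rule tendsto_sandwich[where f="\<lambda>_. 0" and h=\<alpha>max])
  show "\<forall>\<^sub>F k in sequentially. 0 \<le> \<alpha> k i j" using \<alpha>_range[OF assms] by (intro always_eventually) (simp add: less_imp_le)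
  show "\<forall>\<^sub>F k in sequentially. \<alpha> k i j \<le> \<alpha>max k" using alpha_le_max[OF assms] by (intro always_eventually) simp
qed (auto simp: \<alpha>max_lim)

lemma lnabs_lim: assumes "i \<le> N" "j \<le> N" "i \<noteq> j"
  shows "filterlim (\<lambda>k. \<bar>ln (\<alpha> k i j)\<bar>) at_top sequentially"
proof -
  have "filterlim (\<lambda>k. \<alpha> k i j) (at_right 0) sequentially"
    using alpha_lim[OF assms] \<alpha>_range[OF assms] by (intro tendsto_imp_filterlim_at_right) auto
  then have "filterlim (\<lambda>k. ln (\<alpha> k i j)) at_bot sequentially"
    by (rule filterlim_compose[OF ln_at_0])
  then have "filterlim (\<lambda>k. - ln (\<alpha> k i j)) at_top sequentially"
    by (simp add: filterlim_uminus_at_top)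
  moreover have "\<bar>ln (\<alpha> k i j)\<bar> = - ln (\<alpha> k i j)" for k using \<alpha>_range[OF assms, of k] by simp
  ultimately show ?thesis by simp
qed

definition "Xi i k = Max ((\<lambda>j. \<bar>ln (\<alpha> k j i)\<bar> / I i j) ` ({..N}-{i}))"

lemma J_ne: "\<exists>j. j \<le> N \<and> j \<noteq> i"
proof (cases "i = 0")
  case True then show ?thesis using N_ge by (intro exI[of _ 1]) auto
next
  case False then show ?thesis by (intro exI[of _ 0]) auto
qed

lemma Xi_eq: "{\<bar>ln (\<alpha> k j i)\<bar> / I i j | j. j \<le> N \<and> j \<noteq> i} = (\<lambda>j. \<bar>ln (\<alpha> k j i)\<bar> / I i j) ` ({..N}-{i})"
  by auto

lemma Xi_ge: "i \<le> N \<Longrightarrow> j \<le> N \<Longrightarrow> j \<noteq> i \<Longrightarrow> \<bar>ln (\<alpha> k j i)\<bar> / I i j \<le> Xi i k"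
  unfolding Xi_def by (intro Max_ge) auto

lemma Xi_attained: "i \<le> N \<Longrightarrow> \<exists>j. j \<le> N \<and> j \<noteq> i \<and> Xi i k = \<bar>ln (\<alpha> k j i)\<bar> / I i j"
proof -
  assume i: "i \<le> N"
  have "Xi i k \<in> (\<lambda>j. \<bar>ln (\<alpha> k j i)\<bar> / I i j) ` ({..N}-{i})"
    unfolding Xi_def using J_ne by (intro Max_in) auto
  then show ?thesis by auto
qed

lemma Xi_pos: assumes i: "i \<le> N" shows "Xi i k > 0"
proof -
  obtain j where j: "j \<le> N" "j \<noteq> i" using J_ne by auto
  have "0 < \<bar>ln (\<alpha> k j i)\<bar> / I i j"
  proof -
    have "ln (\<alpha> k j i) < 0" using \<alpha>_range[OF j(1) i j(2), of k] by simp
    then show ?thesis using I_pos[OF i j(1) j(2)[symmetric]] by (simp add: divide_neg_pos)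
  qed
  then show ?thesis using Xi_ge[OF i j, of k] by linarith
qed

lemma Xi_lim: assumes i: "i \<le> N" shows "filterlim (Xi i) at_top sequentially"
proof -
  obtain j where j: "j \<le> N" "j \<noteq> i" using J_ne by auto
  have Ip: "I i j > 0" using I_pos[OF i j(1) j(2)[symmetric]] .
  have "filterlim (\<lambda>k. (1 / I i j) * \<bar>ln (\<alpha> k j i)\<bar>) at_top sequentially"
    using Ip lnabs_lim[OF j(1) i j(2)] by (intro filterlim_tendsto_pos_mult_at_top[OF tendsto_const]) auto
  then show ?thesis
    by (rule filterlim_at_top_mono) (use Xi_ge[OF i j] in auto)
qed

lemma PsiXi_lim: "i \<le> N \<Longrightarrow> c > 0 \<Longrightarrow> filterlim (\<lambda>k. \<Psi> (c * Xi i k)) at_top sequentially"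
  by (rule filterlim_compose[OF \<Psi>_inf]) (intro filterlim_tendsto_pos_mult_at_top[OF tendsto_const] Xi_lim)

lemma ratio_lim: "i \<le> N \<Longrightarrow> ((\<lambda>t. \<Psi> (\<delta> * t) / \<Psi> t) \<longlongrightarrow> l) at_top \<Longrightarrow>
   ((\<lambda>k. \<Psi> (\<delta> * Xi i k) / \<Psi> (Xi i k)) \<longlongrightarrow> l) sequentially"
  by (rule filterlim_compose[OF _ Xi_lim])

lemma reg_choice:
  assumes "\<eta> > 0"
  shows "\<exists>\<delta>>1. ((\<lambda>t. \<Psi> (\<delta> * t) / \<Psi> t) \<longlongrightarrow> L \<delta>) at_top \<and> L \<delta> powr r < 1 + \<eta> \<and> 1 - \<eta> < L \<delta> powr r"
    and "\<exists>\<delta>. 0 < \<delta> \<and> \<delta> < 1 \<and> ((\<lambda>t. \<Psi> (\<delta> * t) / \<Psi> t) \<longlongrightarrow> L \<delta>) at_top \<and> L \<delta> powr r < 1 + \<eta> \<and> 1 - \<eta> < L \<delta> powr r"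
proof -
  have "((\<lambda>\<delta>. L \<delta> powr r) \<longlongrightarrow> 1 powr r) (at 1)"
    by (intro tendsto_powr \<Psi>_reg_outer tendsto_const) simp
  then have lim: "((\<lambda>\<delta>. L \<delta> powr r) \<longlongrightarrow> 1) (at 1)" by simp
  define Q where "Q \<delta> \<longleftrightarrow> ((\<lambda>t. \<Psi> (\<delta> * t) / \<Psi> t) \<longlongrightarrow> L \<delta>) at_top \<and> L \<delta> powr r < 1 + \<eta> \<and> 1 - \<eta> < L \<delta> powr r" for \<delta>
  have e1: "eventually (\<lambda>\<delta>. 1 - \<eta> < L \<delta> powr r) (at 1)" using assms by (intro order_tendstoD(1)[OF lim]) simp
  have e2: "eventually (\<lambda>\<delta>. L \<delta> powr r < 1 + \<eta>) (at 1)" using assms by (intro order_tendstoD(2)[OF lim]) simp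
  have ev: "eventually Q (at 1)"
    using \<Psi>_reg_inner e1 e2 unfolding Q_def by eventually_elim blast
  then have evr: "eventually Q (at_right 1)" and evl: "eventually Q (at_left 1)"
    using eventually_at_split by auto
  from evr obtain b where b: "b > 1" "\<And>y. y > 1 \<Longrightarrow> y < b \<Longrightarrow> Q y"
    unfolding eventually_at_right_field by auto
  have "Q ((1 + b) / 2)" using b by auto
  then show "\<exists>\<delta>>1. ((\<lambda>t. \<Psi> (\<delta> * t) / \<Psi> t) \<longlongrightarrow> L \<delta>) at_top \<and> L \<delta> powr r < 1 + \<eta> \<and> 1 - \<eta> < L \<delta> powr r"
    using b(1) unfolding Q_def by (intro exI[of _ "(1 + b) / 2"]) auto
  from evl obtain c where c: "c < 1" "\<And>y. y > c \<Longrightarrow> y < 1 \<Longrightarrow> Q y"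
    unfolding eventually_at_left_field by auto
  have "Q ((max c 0 + 1) / 2)" using c by (intro c(2)) (auto simp: max_def)
  then show "\<exists>\<delta>. 0 < \<delta> \<and> \<delta> < 1 \<and> ((\<lambda>t. \<Psi> (\<delta> * t) / \<Psi> t) \<longlongrightarrow> L \<delta>) at_top \<and> L \<delta> powr r < 1 + \<eta> \<and> 1 - \<eta> < L \<delta> powr r"
    using c(1) unfolding Q_def by (intro exI[of _ "(max c 0 + 1) / 2"]) (auto simp: max_def)
qed

lemma inv_PsiXi_lim: "i \<le> N \<Longrightarrow> ((\<lambda>k. 1 / \<Psi> (Xi i k)) \<longlongrightarrow> 0) sequentially"
proof -
  assume i: "i \<le> N"
  have "filterlim (\<lambda>k. \<Psi> (1 * Xi i k)) at_top sequentially" using PsiXi_lim[OF i, of 1] by simp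
  then have "((\<lambda>k. inverse (\<Psi> (Xi i k))) \<longlongrightarrow> 0) sequentially" by (simp add: tendsto_inverse_0_at_top)
  then show ?thesis by (simp add: inverse_eq_divide)
qed

lemma UB:
  assumes i: "i \<le> N" and \<eta>: "\<eta> > 0"
  shows "\<forall>\<^sub>F k in sequentially. mom (P i) r (msprt_T N lam (a k)) < \<infinity> \<and>
     enn2real (mom (P i) r (msprt_T N lam (a k))) / \<Psi> (Xi i k) powr r \<le> 1 + \<eta>"
proof -
  obtain \<delta> where \<delta>: "\<delta> > 1" and reg: "((\<lambda>t. \<Psi> (\<delta> * t) / \<Psi> t) \<longlongrightarrow> L \<delta>) at_top"
    and L\<delta>: "L \<delta> powr r < 1 + \<eta>" using reg_choice(1)[OF \<eta>] by blast
  define e where "e = (\<delta> - 1) / (\<delta> + 1)"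
  have e: "0 < e" "e < 1" "(1 - e) * \<delta> = 1 + e" using \<delta> by (auto simp: e_def field_simps)
  define K where "K = r * 2 powr (r - 1) * (\<Sum>j\<in>{..N}-{i}. (\<Sum>t. real (Suc t) powr (r - 1) * measure (P i) (dev i j (e * I i j) (Suc t))))"
  have r0: "0 \<le> r" using r_ge by linarith
  have K: "K \<ge> 0"
  proof -
    have "0 \<le> (\<Sum>t. real (Suc t) powr (r - 1) * measure (P i) (dev i j (e * I i j) (Suc t)))" if "j \<in> {..N}-{i}" for j
      using r_complete[OF i, of j "e * I i j"] I_pos[OF i, of j] e that
      by (intro suminf_nonneg) (auto simp: dev_def)
    then show ?thesis unfolding K_def using r0 by (intro mult_nonneg_nonneg sum_nonneg) auto
  qed
  have eva: "\<forall>\<^sub>F k in sequentially. \<forall>j\<in>{..N}-{i}. a k j i \<le> (1 + e) * \<bar>ln (\<alpha> k j i)\<bar>"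
  proof (rule eventually_ball_finite)
    show "\<forall>j\<in>{..N}-{i}. \<forall>\<^sub>F k in sequentially. a k j i \<le> (1 + e) * \<bar>ln (\<alpha> k j i)\<bar>"
    proof
      fix j assume j: "j \<in> {..N}-{i}"
      then have jN: "j \<le> N" "j \<noteq> i" by auto
      have "\<forall>\<^sub>F k in sequentially. a k j i / ln (1 / \<alpha> k j i) < 1 + e"
        using e by (intro order_tendstoD(2)[OF a_asymp[OF i jN(1) jN(2)[symmetric]]]) simp
      then show "\<forall>\<^sub>F k in sequentially. a k j i \<le> (1 + e) * \<bar>ln (\<alpha> k j i)\<bar>"
      proof eventually_elim
        case (elim k)
        have ar: "0 < \<alpha> k j i" "\<alpha> k j i < 1" using \<alpha>_range[OF jN(1) i jN(2)] by auto
        have eq: "ln (1 / \<alpha> k j i) = \<bar>ln (\<alpha> k j i)\<bar>" using ar by (simp add: ln_div)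
        have pos: "\<bar>ln (\<alpha> k j i)\<bar> > 0" using ar by simp
        show ?case using elim pos unfolding eq by (simp add: pos_divide_less_eq less_imp_le)
      qed
    qed
  qed simp
  have Lge: "L \<delta> \<ge> 1"
  proof (rule tendsto_lowerbound[OF reg])
    show "\<forall>\<^sub>F t in at_top. 1 \<le> \<Psi> (\<delta> * t) / \<Psi> t"
      using eventually_gt_at_top[of "0::real"]
    proof eventually_elim
      case (elim t)
      have "\<Psi> t \<le> \<Psi> (\<delta> * t)" using elim \<delta> by (intro Psi_mono) auto
      then show ?case using Psi_pos[OF elim] by simp
    qed
  qed simp
  define u where "u k = ((\<Psi> (\<delta> * Xi i k) + 1) / \<Psi> (Xi i k)) powr r + K * (1 / \<Psi> (Xi i k)) powr r" for k
  have ulim: "u \<longlonglongrightarrow> L \<delta> powr r + K * 0"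
  proof -
    have q: "(\<lambda>k. (\<Psi> (\<delta> * Xi i k) + 1) / \<Psi> (Xi i k)) \<longlonglongrightarrow> L \<delta> + 0"
    proof -
      have "(\<lambda>k. \<Psi> (\<delta> * Xi i k) / \<Psi> (Xi i k) + 1 / \<Psi> (Xi i k)) \<longlonglongrightarrow> L \<delta> + 0"
        by (intro tendsto_add ratio_lim[OF i reg] inv_PsiXi_lim[OF i])
      then show ?thesis by (simp add: add_divide_distrib)
    qed
    have "(\<lambda>k. ((\<Psi> (\<delta> * Xi i k) + 1) / \<Psi> (Xi i k)) powr r) \<longlonglongrightarrow> (L \<delta> + 0) powr r"
      using Lge by (intro tendsto_powr q tendsto_const) auto
    moreover have "(\<lambda>k. (1 / \<Psi> (Xi i k)) powr r) \<longlonglongrightarrow> 0"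
    proof (rule tendsto_zero_powrI[OF inv_PsiXi_lim[OF i] tendsto_const])
      show "\<forall>\<^sub>F x in sequentially. 0 \<le> 1 / \<Psi> (Xi i x)"
        using Psi_pos[OF Xi_pos[OF i]] by (intro always_eventually) (simp add: less_imp_le)
    qed (use r_ge in simp)
    ultimately show ?thesis unfolding u_def by (intro tendsto_add tendsto_mult tendsto_const) auto
  qed
  have evu: "\<forall>\<^sub>F k in sequentially. u k < 1 + \<eta>"
    using L\<delta> by (intro order_tendstoD(2)[OF ulim]) simp
  show ?thesis using eva evu
  proof eventually_elim
    case (elim k)
    define X where "X = Xi i k"
    define y where "y = \<Psi> (\<delta> * X)"
    have X: "X > 0" unfolding X_def by (rule Xi_pos[OF i])
    have dX: "\<delta> * X > 0" using X \<delta> by simp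
    have y: "y > 0" unfolding y_def using Psi_pos[OF dX] .
    define n0 where "n0 = nat \<lceil>y\<rceil>"
    have n0y: "y \<le> real n0" "real n0 \<le> y + 1" unfolding n0_def using y by linarith+
    have n0: "n0 \<ge> 1" using n0y y unfolding n0_def by linarith
    have H: "a k j i \<le> (1 - e) * I i j * \<psi> (real n)" if n: "n \<ge> n0" and j: "j \<le> N" "j \<noteq> i" for n j
    proof -
      have Ip: "I i j > 0" using I_pos[OF i j(1) j(2)[symmetric]] .
      have "a k j i \<le> (1 + e) * \<bar>ln (\<alpha> k j i)\<bar>" using elim(1) j by auto
      also have "\<bar>ln (\<alpha> k j i)\<bar> \<le> I i j * X"
        using Xi_ge[OF i j, of k] Ip unfolding X_def by (simp add: divide_le_eq mult.commute)
      then have "(1 + e) * \<bar>ln (\<alpha> k j i)\<bar> \<le> (1 + e) * (I i j * X)" using e by (intro mult_left_mono) auto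
      also have "(1 + e) * (I i j * X) = (1 - e) * I i j * (\<delta> * X)" using e(3) by (simp add: algebra_simps flip: e(3))
      also have "\<delta> * X \<le> \<psi> (real n)"
        using n n0y n0 dX unfolding y_def by (intro psi_ge) auto
      then have "(1 - e) * I i j * (\<delta> * X) \<le> (1 - e) * I i j * \<psi> (real n)"
        using e Ip by (intro mult_left_mono) auto
      finally show ?thesis .
    qed
    have mb: "mom (P i) r (msprt_T N lam (a k)) \<le> ennreal (real n0 powr r + K)"
      unfolding K_def by (rule mom_upper[OF i e(1,2) n0 H])
    have fin: "mom (P i) r (msprt_T N lam (a k)) < \<infinity>"
      using mb by (simp add: le_less_trans)
    have "enn2real (mom (P i) r (msprt_T N lam (a k))) \<le> real n0 powr r + K"
      using mb K by (intro enn2real_leI) auto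
    also have "real n0 powr r \<le> (y + 1) powr r" using n0y r0 by (intro powr_mono2) auto
    finally have e1: "enn2real (mom (P i) r (msprt_T N lam (a k))) \<le> (y + 1) powr r + K" by simp
    have PX: "\<Psi> X > 0" using Psi_pos[OF X] .
    have "enn2real (mom (P i) r (msprt_T N lam (a k))) / \<Psi> X powr r \<le> ((y + 1) powr r + K) / \<Psi> X powr r"
      using e1 PX by (intro divide_right_mono) auto
    also have "\<dots> = u k"
    proof -
      have a1: "((y + 1) / \<Psi> X) powr r = (y + 1) powr r / \<Psi> X powr r"
        using PX y by (intro powr_divide; simp)
      have a2: "(1 / \<Psi> X) powr r = 1 / \<Psi> X powr r"
        using PX by (subst powr_divide) auto
      have "u k = ((y + 1) / \<Psi> X) powr r + K * (1 / \<Psi> X) powr r"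
        unfolding u_def X_def y_def ..
      also have "\<dots> = (y + 1) powr r / \<Psi> X powr r + K * (1 / \<Psi> X powr r)" unfolding a1 a2 ..
      also have "\<dots> = ((y + 1) powr r + K) / \<Psi> X powr r" by (simp add: add_divide_distrib)
      finally show ?thesis by simp
    qed
    finally show ?case using fin elim(2) unfolding X_def by simp
  qed
qed

lemma dev_lim: assumes i: "i \<le> N" and j: "j \<le> N" "j \<noteq> i" and \<epsilon>: "\<epsilon> > 0"
  shows "(\<lambda>m. measure (P i) (dev i j \<epsilon> m)) \<longlonglongrightarrow> 0"
proof (rule LIMSEQ_imp_Suc)
  have sm: "summable (\<lambda>t. real (Suc t) powr (r - 1) * measure (P i) (dev i j \<epsilon> (Suc t)))"
    using r_complete[OF i j(1) j(2)[symmetric] \<epsilon>] by (simp add: dev_def)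
  show "(\<lambda>t. measure (P i) (dev i j \<epsilon> (Suc t))) \<longlonglongrightarrow> 0"
  proof (rule tendsto_sandwich[OF _ _ tendsto_const summable_LIMSEQ_zero[OF sm]])
    show "\<forall>\<^sub>F t in sequentially. 0 \<le> measure (P i) (dev i j \<epsilon> (Suc t))" by simp
    show "\<forall>\<^sub>F t in sequentially. measure (P i) (dev i j \<epsilon> (Suc t)) \<le> real (Suc t) powr (r - 1) * measure (P i) (dev i j \<epsilon> (Suc t))"
    proof (intro always_eventually allI)
      fix t
      have "1 \<le> real (Suc t) powr (r - 1)" using r_ge by (intro ge_one_powr_ge_zero) auto
      then show "measure (P i) (dev i j \<epsilon> (Suc t)) \<le> real (Suc t) powr (r - 1) * measure (P i) (dev i j \<epsilon> (Suc t))"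
        using mult_right_mono[of 1 "real (Suc t) powr (r - 1)" "measure (P i) (dev i j \<epsilon> (Suc t))"] by simp
    qed
  qed
qed

lemma LB:
  assumes i: "i \<le> N" and \<eta>: "0 < \<eta>" "\<eta> < 1"
  shows "\<forall>\<^sub>F k in sequentially. \<forall>D\<in>Csim M F P N (\<alpha> k).
     ennreal ((1 - \<eta>) * \<Psi> (Xi i k) powr r) \<le> mom (P i) r (fst D)"
proof -
  obtain \<delta> where \<delta>: "0 < \<delta>" "\<delta> < 1" and reg: "((\<lambda>t. \<Psi> (\<delta> * t) / \<Psi> t) \<longlongrightarrow> L \<delta>) at_top"
    and L\<delta>: "1 - \<eta> < L \<delta> powr r" using reg_choice(2)[OF \<eta>(1)] by blast
  have Lnz: "L \<delta> \<noteq> 0" using L\<delta> \<eta> by auto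
  define \<theta> where "\<theta> = (1 + \<delta>) / 2"
  have \<theta>: "\<delta> < \<theta>" "\<theta> < 1" using \<delta> by (auto simp: \<theta>_def)
  define \<epsilon> where "\<epsilon> j = I i j * (\<theta> / \<delta> - 1) / 2" for j
  have \<epsilon>: "\<epsilon> j > 0" "\<epsilon> j < I i j * (\<theta> / \<delta> - 1)" if "j \<le> N" "j \<noteq> i" for j
  proof -
    have "\<theta> / \<delta> > 1" using \<theta> \<delta> by (simp add: less_divide_eq)
    then have "0 < I i j * (\<theta> / \<delta> - 1)"
      using I_pos[OF i that(1) that(2)[symmetric]] by simp
    then show "\<epsilon> j > 0" "\<epsilon> j < I i j * (\<theta> / \<delta> - 1)"
      unfolding \<epsilon>_def by simp_all
  qed
  define J where "J = {..N} - {i}"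
  define n where "n k = nat \<lfloor>\<Psi> (\<delta> * Xi i k)\<rfloor>" for k
  have nlim: "filterlim n at_top sequentially"
    unfolding n_def
    by (rule filterlim_compose[OF filterlim_nat_sequentially filterlim_compose[OF filterlim_floor_sequentially PsiXi_lim[OF i \<delta>(1)]]])
  define \<rho> where "\<rho> k = (\<Sum>j\<in>J. \<alpha> k i j) + (\<Sum>j\<in>J. \<alpha> k j i powr (1 - \<theta>)) + (\<Sum>j\<in>J. measure (P i) (dev i j (\<epsilon> j) (n k)))" for k
  have \<rho>lim: "\<rho> \<longlonglongrightarrow> 0 + 0 + 0"
    unfolding \<rho>_def
  proof (intro tendsto_add tendsto_null_sum)
    fix j assume j: "j \<in> J"
    then have jN: "j \<le> N" "j \<noteq> i" by (auto simp: J_def)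
    show "(\<lambda>k. \<alpha> k i j) \<longlonglongrightarrow> 0" using alpha_lim[OF i jN(1) jN(2)[symmetric]] .
    show "(\<lambda>k. \<alpha> k j i powr (1 - \<theta>)) \<longlonglongrightarrow> 0"
    proof (rule tendsto_zero_powrI[OF alpha_lim[OF jN(1) i jN(2)] tendsto_const])
      show "\<forall>\<^sub>F x in sequentially. 0 \<le> \<alpha> x j i" using \<alpha>_range[OF jN(1) i jN(2)] by (intro always_eventually) (simp add: less_imp_le)
    qed (use \<theta> in simp)
    show "(\<lambda>k. measure (P i) (dev i j (\<epsilon> j) (n k))) \<longlonglongrightarrow> 0"
      by (rule filterlim_compose[OF dev_lim[OF i jN \<epsilon>(1)[OF jN]] nlim])
  qed
  define v where "v k = (\<Psi> (\<delta> * Xi i k) / \<Psi> (Xi i k)) powr r * (1 - \<rho> k)" for k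
  have vlim: "v \<longlonglongrightarrow> L \<delta> powr r * (1 - (0 + 0 + 0))"
    unfolding v_def by (intro tendsto_mult tendsto_powr ratio_lim[OF i reg] tendsto_const tendsto_diff \<rho>lim Lnz)
  have evv: "\<forall>\<^sub>F k in sequentially. 1 - \<eta> < v k" using L\<delta> by (intro order_tendstoD(1)[OF vlim]) simp
  have evn: "\<forall>\<^sub>F k in sequentially. 1 \<le> n k" using nlim unfolding filterlim_at_top by blast
  have ev\<rho>: "\<forall>\<^sub>F k in sequentially. \<rho> k < 1" by (intro order_tendstoD(2)[OF \<rho>lim]) simp
  show ?thesis using evv evn ev\<rho>
  proof eventually_elim
    case (elim k)
    show ?case
    proof
      fix D assume D: "D \<in> Csim M F P N (\<alpha> k)"
      obtain T dd where Tdd: "D = (T, dd)" by (cases D)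
      have DT: "(T, dd) \<in> Csim M F P N (\<alpha> k)" using D Tdd by simp
      have st: "is_stopping_time F T" using DT unfolding Csim_def by auto
      define X where "X = Xi i k"
      have X: "X > 0" unfolding X_def by (rule Xi_pos[OF i])
      obtain j0 where j0: "j0 \<le> N" "j0 \<noteq> i" "X = \<bar>ln (\<alpha> k j0 i)\<bar> / I i j0"
        using Xi_attained[OF i, of k] unfolding X_def by blast
      have j0J: "j0 \<in> J" using j0 by (auto simp: J_def)
      have Ip: "I i j0 > 0" using I_pos[OF i j0(1) j0(2)[symmetric]] .
      have ar: "0 < \<alpha> k j0 i" "\<alpha> k j0 i < 1" using \<alpha>_range[OF j0(1) i j0(2)] by auto
      have lnX: "\<bar>ln (\<alpha> k j0 i)\<bar> = I i j0 * X" using j0(3) Ip by simp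
      define b where "b = \<theta> * \<bar>ln (\<alpha> k j0 i)\<bar>"
      have dX: "\<delta> * X > 0" using \<delta> X by simp
      define y where "y = \<Psi> (\<delta> * X)"
      have y: "y > 0" unfolding y_def using Psi_pos[OF dX] .
      have nk: "real (n k) \<le> y" "y \<le> real (Suc (n k))"
        unfolding n_def X_def[symmetric] y_def[symmetric] using y by linarith+
      have n1: "n k \<ge> 1" using elim(2) .
      have psin: "\<psi> (real (n k)) \<le> \<delta> * X" "\<psi> (real (n k)) > 0"
        using psi_le[of "real (n k)" "\<delta> * X"] nk n1 dX psi_pos[of "real (n k)"] unfolding y_def by auto
      have cb: "measure (P i) {\<omega>\<in>space M. T \<omega> \<le> enat (n k)} \<le>
          (\<Sum>j'\<in>{..N}-{i}. \<alpha> k i j') + exp b * \<alpha> k j0 i + measure (P i) {\<omega>\<in>space M. b \<le> lam i j0 (n k) \<omega>}"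
        by (rule Csim_bound[OF i DT j0(1,2)])
      have eb: "exp b * \<alpha> k j0 i = \<alpha> k j0 i powr (1 - \<theta>)"
      proof -
        have "\<bar>ln (\<alpha> k j0 i)\<bar> = - ln (\<alpha> k j0 i)" using ar by simp
        then have "exp b * \<alpha> k j0 i = exp (- \<theta> * ln (\<alpha> k j0 i)) * exp (ln (\<alpha> k j0 i))"
          unfolding b_def using ar by simp
        also have "\<dots> = exp ((1 - \<theta>) * ln (\<alpha> k j0 i))" by (simp add: exp_add[symmetric] algebra_simps)
        also have "\<dots> = \<alpha> k j0 i powr (1 - \<theta>)" using ar by (simp add: powr_def)
        finally show ?thesis .
      qed
      have sub: "{\<omega>\<in>space M. b \<le> lam i j0 (n k) \<omega>} \<subseteq> dev i j0 (\<epsilon> j0) (n k)"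
      proof
        fix \<omega> assume w: "\<omega> \<in> {\<omega>\<in>space M. b \<le> lam i j0 (n k) \<omega>}"
        let ?p = "\<psi> (real (n k))"
        have "\<theta> * I i j0 * ?p / \<delta> \<le> \<theta> * I i j0 * X"
          using psin \<delta> \<theta> Ip by (simp add: divide_le_eq mult.commute mult.left_commute)
        also have "\<dots> = b" unfolding b_def lnX by simp
        also have "b \<le> lam i j0 (n k) \<omega>" using w by simp
        finally have "\<theta> * I i j0 / \<delta> \<le> lam i j0 (n k) \<omega> / ?p"
          using psin by (simp add: le_divide_eq)
        then have "I i j0 * (\<theta> / \<delta> - 1) \<le> lam i j0 (n k) \<omega> / ?p - I i j0"
          by (simp add: algebra_simps)
        then have "\<epsilon> j0 < \<bar>lam i j0 (n k) \<omega> / ?p - I i j0\<bar>" using \<epsilon>(2)[OF j0(1,2)] by linarith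
        then show "\<omega> \<in> dev i j0 (\<epsilon> j0) (n k)" using w by (simp add: dev_def)
      qed
      have m1: "measure (P i) {\<omega>\<in>space M. b \<le> lam i j0 (n k) \<omega>} \<le> measure (P i) (dev i j0 (\<epsilon> j0) (n k))"
      proof -
        interpret Pi: prob_space "P i" using P_prob[OF i] .
        show ?thesis using sub dev_sets[OF i j0(1)] P_sets[OF i] by (intro Pi.finite_measure_mono) auto
      qed
      have m2: "measure (P i) (dev i j0 (\<epsilon> j0) (n k)) \<le> (\<Sum>j\<in>J. measure (P i) (dev i j (\<epsilon> j) (n k)))"
        using j0J by (intro member_le_sum) (auto simp: J_def)
      have m3: "\<alpha> k j0 i powr (1 - \<theta>) \<le> (\<Sum>j\<in>J. \<alpha> k j i powr (1 - \<theta>))"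
        using j0J by (intro member_le_sum) (auto simp: J_def)
      have PT: "measure (P i) {\<omega>\<in>space M. T \<omega> \<le> enat (n k)} \<le> \<rho> k"
        using cb m1 m2 m3 unfolding eb \<rho>_def J_def by linarith
      have "ennreal ((1 - \<eta>) * \<Psi> X powr r) \<le> ennreal (v k * \<Psi> X powr r)"
        using elim(1) unfolding X_def by (intro ennreal_leI mult_right_mono) auto
      also have "v k * \<Psi> X powr r = y powr r * (1 - \<rho> k)"
      proof -
        have PX: "\<Psi> X > 0" using Psi_pos[OF X] .
        have "(y / \<Psi> X) powr r = y powr r / \<Psi> X powr r" using y PX by (intro powr_divide; simp)
        then show ?thesis unfolding v_def X_def[symmetric] y_def[symmetric] using PX by simp
      qed
      also have "ennreal (y powr r * (1 - \<rho> k)) \<le> ennreal (real (Suc (n k)) powr r * (1 - \<rho> k))"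
        using elim(3) nk y r_ge by (intro ennreal_leI mult_right_mono powr_mono2) auto
      also have "\<dots> \<le> ennreal (real (Suc (n k)) powr r * (1 - measure (P i) {\<omega>\<in>space M. T \<omega> \<le> enat (n k)}))"
        using PT by (intro ennreal_leI mult_left_mono) auto
      also have "\<dots> \<le> mom (P i) r T" by (rule mom_lower[OF i st])
      finally show "ennreal ((1 - \<eta>) * \<Psi> (Xi i k) powr r) \<le> mom (P i) r (fst D)"
        unfolding X_def Tdd by simp
    qed
  qed
qed

lemma main: "\<forall>i\<le>N.
     let B = (\<lambda>k. \<Psi> (Max {\<bar>ln (\<alpha> k j i)\<bar> / I i j | j. j \<le> N \<and> j \<noteq> i}) powr r);
         ET = (\<lambda>k. mom (P i) r (msprt_T N lam (a k)));
         Inf_ET = (\<lambda>k. INF D \<in> Csim M F P N (\<alpha> k). mom (P i) r (fst D))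
     in (\<forall>\<^sub>F k in sequentially. ET k < \<infinity>) \<and>
        (\<lambda>k. enn2real (ET k) / B k) \<longlonglongrightarrow> 1 \<and>
        (\<forall>\<^sub>F k in sequentially. Inf_ET k < \<infinity>) \<and>
        (\<lambda>k. enn2real (Inf_ET k) / B k) \<longlonglongrightarrow> 1"
proof (intro allI impI)
  fix i assume i: "i \<le> N"
  define B where "B k = \<Psi> (Xi i k) powr r" for k
  define ET where "ET k = mom (P i) r (msprt_T N lam (a k))" for k
  define IE where "IE k = (INF D \<in> Csim M F P N (\<alpha> k). mom (P i) r (fst D))" for k
  have BX: "\<Psi> (Max {\<bar>ln (\<alpha> k j i)\<bar> / I i j | j. j \<le> N \<and> j \<noteq> i}) powr r = B k" for k
    unfolding B_def Xi_def Xi_eq ..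
  have Bpos: "B k > 0" for k unfolding B_def using Psi_pos[OF Xi_pos[OF i, of k]] by simp
  have IEle: "IE k \<le> ET k" for k
    unfolding IE_def ET_def using INF_lower[OF msprt_Csim[of k], of "\<lambda>D. mom (P i) r (fst D)"] by simp
  have key: "\<forall>\<^sub>F k in sequentially. ET k < \<infinity> \<and> IE k < \<infinity> \<and>
      1 - \<eta> \<le> enn2real (IE k) / B k \<and> enn2real (IE k) / B k \<le> enn2real (ET k) / B k \<and>
      enn2real (ET k) / B k \<le> 1 + \<eta>" if \<eta>: "0 < \<eta>" "\<eta> < 1" for \<eta>
    using UB[OF i \<eta>(1)] LB[OF i \<eta>]
  proof eventually_elim
    case (elim k)
    have fin: "ET k < \<infinity>" using elim(1) unfolding ET_def by simp
    have finI: "IE k < \<infinity>" using IEle[of k] fin by (simp add: le_less_trans)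
    have "ennreal ((1 - \<eta>) * B k) \<le> IE k"
      unfolding IE_def B_def using elim(2) by (intro INF_greatest) auto
    then have "enn2real (ennreal ((1 - \<eta>) * B k)) \<le> enn2real (IE k)" using finI by (intro enn2real_mono) auto
    then have l: "(1 - \<eta>) * B k \<le> enn2real (IE k)" using \<eta> Bpos[of k] by simp
    have m: "enn2real (IE k) \<le> enn2real (ET k)" using IEle[of k] fin by (intro enn2real_mono) auto
    show ?case
    proof (intro conjI)
      show "ET k < \<infinity>" "IE k < \<infinity>" using fin finI by auto
      show "1 - \<eta> \<le> enn2real (IE k) / B k" using l Bpos[of k] by (simp add: le_divide_eq)
      show "enn2real (IE k) / B k \<le> enn2real (ET k) / B k" using m Bpos[of k] by (intro divide_right_mono) auto
      show "enn2real (ET k) / B k \<le> 1 + \<eta>" using elim(1) unfolding ET_def B_def by simp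
    qed
  qed
  have t1: "(\<lambda>k. enn2real (ET k) / B k) \<longlonglongrightarrow> 1" and t2: "(\<lambda>k. enn2real (IE k) / B k) \<longlonglongrightarrow> 1"
  proof -
    have "\<forall>\<^sub>F k in sequentially. dist (enn2real (ET k) / B k) 1 < e \<and> dist (enn2real (IE k) / B k) 1 < e"
      if e: "e > 0" for e
    proof -
      define \<eta> where "\<eta> = min (e / 2) (1 / 2)"
      have \<eta>: "0 < \<eta>" "\<eta> < 1" "\<eta> < e" using e by (auto simp: \<eta>_def)
      show ?thesis using key[OF \<eta>(1,2)]
      proof eventually_elim
        case (elim k)
        then show ?case using \<eta>(3) by (auto simp: dist_real_def abs_if)
      qed
    qed
    note ev = this
    show "(\<lambda>k. enn2real (ET k) / B k) \<longlonglongrightarrow> 1" unfolding tendsto_iff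
    proof (intro allI impI)
      fix e :: real assume "e > 0"
      from ev[OF this] show "\<forall>\<^sub>F k in sequentially. dist (enn2real (ET k) / B k) 1 < e"
        by eventually_elim blast
    qed
    show "(\<lambda>k. enn2real (IE k) / B k) \<longlonglongrightarrow> 1" unfolding tendsto_iff
    proof (intro allI impI)
      fix e :: real assume "e > 0"
      from ev[OF this] show "\<forall>\<^sub>F k in sequentially. dist (enn2real (IE k) / B k) 1 < e"
        by eventually_elim blast
    qed
  qed
  have e1: "\<forall>\<^sub>F k in sequentially. ET k < \<infinity>" and e2: "\<forall>\<^sub>F k in sequentially. IE k < \<infinity>"
    using key[of "1/2"] by (simp_all add: eventually_conj_iff)
  show "let B = (\<lambda>k. \<Psi> (Max {\<bar>ln (\<alpha> k j i)\<bar> / I i j | j. j \<le> N \<and> j \<noteq> i}) powr r);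
         ET = (\<lambda>k. mom (P i) r (msprt_T N lam (a k)));
         Inf_ET = (\<lambda>k. INF D \<in> Csim M F P N (\<alpha> k). mom (P i) r (fst D))
     in (\<forall>\<^sub>F k in sequentially. ET k < \<infinity>) \<and>
        (\<lambda>k. enn2real (ET k) / B k) \<longlonglongrightarrow> 1 \<and>
        (\<forall>\<^sub>F k in sequentially. Inf_ET k < \<infinity>) \<and>
        (\<lambda>k. enn2real (Inf_ET k) / B k) \<longlonglongrightarrow> 1"
    unfolding Let_def BX using e1 e2 t1 t2 unfolding ET_def IE_def by simp
qed


end

theorem theorem3:
  fixes M :: "'a measure" and S :: "'b measure" and X :: "nat \<Rightarrow> 'a \<Rightarrow> 'b"
    and N :: nat and P :: "nat \<Rightarrow> 'a measure"
    and F :: "nat \<Rightarrow> 'a measure"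
    and \<mu> :: "nat \<Rightarrow> 'a measure" and p :: "nat \<Rightarrow> nat \<Rightarrow> 'a \<Rightarrow> real"
    and lam :: "nat \<Rightarrow> nat \<Rightarrow> nat \<Rightarrow> 'a \<Rightarrow> real"
    and \<psi> \<Psi> :: "real \<Rightarrow> real" and L :: "real \<Rightarrow> real"
    and I :: "nat \<Rightarrow> nat \<Rightarrow> real" and r :: real
    and \<alpha> :: "nat \<Rightarrow> nat \<Rightarrow> nat \<Rightarrow> real" and \<alpha>max :: "nat \<Rightarrow> real"
    and c :: "nat \<Rightarrow> nat \<Rightarrow> real"
    and a :: "nat \<Rightarrow> nat \<Rightarrow> nat \<Rightarrow> real" and d :: "nat \<Rightarrow> 'a \<Rightarrow> nat"
  assumes X_meas: "\<And>t. X t \<in> M \<rightarrow>\<^sub>M S"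
    and N_ge: "N \<ge> 1"
    and P_prob: "\<And>i. i \<le> N \<Longrightarrow> prob_space (P i)"
    and P_sets: "\<And>i. i \<le> N \<Longrightarrow> sets (P i) = sets M"
    and F_def: "F = obs_filt M S X"
    and \<mu>_sets: "\<And>n. sets (\<mu> n) = sets (F n)"
    and \<mu>_sfin: "\<And>n. sigma_finite_measure (\<mu> n)"
    and p_meas: "\<And>i n. i \<le> N \<Longrightarrow> p i n \<in> borel_measurable (F n)"
    and p_nonneg: "\<And>i n \<omega>. i \<le> N \<Longrightarrow> p i n \<omega> \<ge> 0"
    and p_dens: "\<And>i n. i \<le> N \<Longrightarrow>
        restr_to_subalg (P i) (F n) = density (\<mu> n) (\<lambda>\<omega>. ennreal (p i n \<omega>))"
    and mutual_ac: "\<And>i j n. i \<le> N \<Longrightarrow> j \<le> N \<Longrightarrow>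
        absolutely_continuous (restr_to_subalg (P i) (F n)) (restr_to_subalg (P j) (F n))"
    and lam_def: "lam = (\<lambda>i j n \<omega>. ln (p i n \<omega> / p j n \<omega>))"
    and \<psi>_mono: "strict_mono_on {0<..} \<psi>"
    and \<psi>_bij: "bij_betw \<psi> {0<..} {0<..}"
    and \<psi>_inf: "filterlim \<psi> at_top at_top"
    and \<Psi>_def: "\<Psi> = the_inv_into {0<..} \<psi>"
    and \<Psi>_inf: "filterlim \<Psi> at_top at_top"
    and \<Psi>_reg_inner: "\<forall>\<^sub>F \<delta> in at 1. ((\<lambda>t. \<Psi> (\<delta> * t) / \<Psi> t) \<longlongrightarrow> L \<delta>) at_top"
    and \<Psi>_reg_outer: "(L \<longlongrightarrow> 1) (at 1)"
    and I_pos: "\<And>i j. i \<le> N \<Longrightarrow> j \<le> N \<Longrightarrow> i \<noteq> j \<Longrightarrow> I i j > 0"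
    and r_ge: "r \<ge> 1"
    and r_complete: "\<And>i j \<epsilon>. i \<le> N \<Longrightarrow> j \<le> N \<Longrightarrow> i \<noteq> j \<Longrightarrow> \<epsilon> > 0 \<Longrightarrow>
        summable (\<lambda>t. real (Suc t) powr (r - 1) *
          measure (P i) {\<omega> \<in> space M. \<bar>lam i j (Suc t) \<omega> / \<psi> (real (Suc t)) - I i j\<bar> > \<epsilon>})
        \<and> ((\<lambda>n. \<Sum>t. real (Suc (t + n)) powr (r - 1) *
          measure (P i) {\<omega> \<in> space M. \<bar>lam i j (Suc (t + n)) \<omega> / \<psi> (real (Suc (t + n))) - I i j\<bar> > \<epsilon>})
           \<longlonglongrightarrow> 0)"
    and \<alpha>_range: "\<And>k i j. i \<le> N \<Longrightarrow> j \<le> N \<Longrightarrow> i \<noteq> j \<Longrightarrow> 0 < \<alpha> k i j \<and> \<alpha> k i j < 1"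
    and \<alpha>max_def: "\<alpha>max = (\<lambda>k. Max {\<alpha> k i j | i j. i \<le> N \<and> j \<le> N \<and> i \<noteq> j})"
    and \<alpha>max_lim: "\<alpha>max \<longlonglongrightarrow> 0"
    and c_range: "\<And>i j. i \<le> N \<Longrightarrow> j \<le> N \<Longrightarrow> i \<noteq> j \<Longrightarrow> 0 < c i j \<and> c i j \<le> 1"
    and c_lim: "\<And>i j. i \<le> N \<Longrightarrow> j \<le> N \<Longrightarrow> i \<noteq> j \<Longrightarrow>
        (\<lambda>k. \<bar>ln (\<alpha> k i j)\<bar> / \<bar>ln (\<alpha>max k)\<bar>) \<longlonglongrightarrow> c i j"
    and a_pos: "\<And>k i j. i \<le> N \<Longrightarrow> j \<le> N \<Longrightarrow> i \<noteq> j \<Longrightarrow> a k i j > 0"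
    and a_asymp: "\<And>i j. i \<le> N \<Longrightarrow> j \<le> N \<Longrightarrow> i \<noteq> j \<Longrightarrow>
        (\<lambda>k. a k j i / ln (1 / \<alpha> k j i)) \<longlonglongrightarrow> 1"
    and d_msprt: "\<And>k. msprt_decision M F N lam (a k) (d k)"
    and msprt_err: "\<And>k i j. i \<le> N \<Longrightarrow> j \<le> N \<Longrightarrow> i \<noteq> j \<Longrightarrow>
        measure (P i) {\<omega> \<in> space M. d k \<omega> = j} \<le> \<alpha> k i j"
  shows "\<forall>i\<le>N.
     let B = (\<lambda>k. \<Psi> (Max {\<bar>ln (\<alpha> k j i)\<bar> / I i j | j. j \<le> N \<and> j \<noteq> i}) powr r);
         ET = (\<lambda>k. mom (P i) r (msprt_T N lam (a k)));
         Inf_ET = (\<lambda>k. INF D \<in> Csim M F P N (\<alpha> k). mom (P i) r (fst D))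
     in (\<forall>\<^sub>F k in sequentially. ET k < \<infinity>) \<and>
        (\<lambda>k. enn2real (ET k) / B k) \<longlonglongrightarrow> 1 \<and>
        (\<forall>\<^sub>F k in sequentially. Inf_ET k < \<infinity>) \<and>
        (\<lambda>k. enn2real (Inf_ET k) / B k) \<longlonglongrightarrow> 1"
  proof -
  have Fsp: "\<And>n. space (F n) = space M" using F_def obs_filt_space by simp
  have Fs: "\<And>n. sets (F n) \<subseteq> sets M" using F_def obs_filt_sets[OF X_meas] by simp
  have rc: "\<And>i j \<epsilon>. i \<le> N \<Longrightarrow> j \<le> N \<Longrightarrow> i \<noteq> j \<Longrightarrow> \<epsilon> > 0 \<Longrightarrow>
        summable (\<lambda>t. real (Suc t) powr (r - 1) *
          measure (P i) {\<omega> \<in> space M. \<bar>lam i j (Suc t) \<omega> / \<psi> (real (Suc t)) - I i j\<bar> > \<epsilon>})"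
    using r_complete by blast
  interpret thm3 M N P F \<mu> p lam \<psi> \<Psi> L I r \<alpha> \<alpha>max a d
    by (rule thm3.intro) (fact N_ge P_prob P_sets Fsp Fs \<mu>_sets p_meas p_nonneg p_dens mutual_ac lam_def
        \<psi>_mono \<psi>_bij \<Psi>_def \<Psi>_inf \<Psi>_reg_inner \<Psi>_reg_outer I_pos r_ge rc \<alpha>_range \<alpha>max_def \<alpha>max_lim
        a_asymp d_msprt msprt_err)+
  show ?thesis by (rule main)
qed

end
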